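(* Let $\mathcal{A}\subseteq\mathcal{B}(\mathcal{H})$ be a von Neumann algebra, $T:\mathcal{A}\to\mathcal{A}$ a Markov operator, and $N\in\mathbb{N}$. If $y\in\mathcal{A}_+$ is a potential for $T^N$, then $\tilde y:=y+T(y)+\dots+T^{N-1}(y)$ is a potential for $T$.
   Context: A Markov operator is a normal completely positive unital linear map on $\mathcal{A}$ ($\mathbbm{1}\in\mathcal{A}$). For a Markov operator $S$, $x\in\mathcal{A}_+$ is $S$-summable if $\sum_{n\ge0}S^n(x)$ converges strongly to an element of $\mathcal{A}_+$, and $y\in\mathcal{A}_+$ is a potential for $S$ if $y=\sum_{n\ge0}S^n(x)$ for some $S$-summable $x\in\mathcal{A}_+$. *)

theory Defs
  imports "HOL-Analysis.Analysis" "HOL-Library.Complex_Order"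
begin

text \<open>A complex Hilbert space is given by a type 'h carrying an additive group
structure, a complex scalar multiplication sc and a complex inner product ip
(conjugate-linear in the first, linear in the second argument), complete w.r.t.
the induced norm.\<close>

definition hnorm :: "('h \<Rightarrow> 'h \<Rightarrow> complex) \<Rightarrow> 'h \<Rightarrow> real" where
  "hnorm ip x = sqrt (Re (ip x x))"

definition complex_hilbert ::
  "(complex \<Rightarrow> 'h::ab_group_add \<Rightarrow> 'h) \<Rightarrow> ('h \<Rightarrow> 'h \<Rightarrow> complex) \<Rightarrow> bool" where
  "complex_hilbert sc ip \<longleftrightarrow>
     (\<forall>x. sc 1 x = x) \<and>
     (\<forall>a b x. sc a (sc b x) = sc (a * b) x) \<and>
     (\<forall>a x y. sc a (x + y) = sc a x + sc a y) \<and>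
     (\<forall>a b x. sc (a + b) x = sc a x + sc b x) \<and>
     (\<forall>x y z. ip x (y + z) = ip x y + ip x z) \<and>
     (\<forall>a x y. ip x (sc a y) = a * ip x y) \<and>
     (\<forall>x y. ip y x = cnj (ip x y)) \<and>
     (\<forall>x. 0 \<le> ip x x) \<and>
     (\<forall>x. ip x x = 0 \<longrightarrow> x = 0) \<and>
     (\<forall>X :: nat \<Rightarrow> 'h.
        (\<forall>e>0. \<exists>M. \<forall>m\<ge>M. \<forall>n\<ge>M. hnorm ip (X m - X n) < e) \<longrightarrow>
        (\<exists>l. (\<lambda>n. hnorm ip (X n - l)) \<longlonglongrightarrow> 0))"

definition bops ::
  "(complex \<Rightarrow> 'h::ab_group_add \<Rightarrow> 'h) \<Rightarrow> ('h \<Rightarrow> 'h \<Rightarrow> complex) \<Rightarrow> ('h \<Rightarrow> 'h) set" where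
  "bops sc ip = {A. (\<forall>x y. A (x + y) = A x + A y) \<and> (\<forall>a x. A (sc a x) = sc a (A x)) \<and>
                    (\<exists>C. \<forall>x. hnorm ip (A x) \<le> C * hnorm ip x)}"

definition hadj :: "('h \<Rightarrow> 'h \<Rightarrow> complex) \<Rightarrow> ('h \<Rightarrow> 'h) \<Rightarrow> ('h \<Rightarrow> 'h)" where
  "hadj ip A = (THE B. \<forall>x y. ip (A x) y = ip x (B y))"

definition commutant ::
  "(complex \<Rightarrow> 'h::ab_group_add \<Rightarrow> 'h) \<Rightarrow> ('h \<Rightarrow> 'h \<Rightarrow> complex) \<Rightarrow> ('h \<Rightarrow> 'h) set \<Rightarrow> ('h \<Rightarrow> 'h) set" where
  "commutant sc ip S = {B \<in> bops sc ip. \<forall>A\<in>S. B \<circ> A = A \<circ> B}"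

text \<open>Von Neumann algebra: a self-adjoint subset of B(H) equal to its bicommutant
(equivalently a unital strongly closed *-subalgebra of B(H)).\<close>
definition von_neumann_algebra ::
  "(complex \<Rightarrow> 'h::ab_group_add \<Rightarrow> 'h) \<Rightarrow> ('h \<Rightarrow> 'h \<Rightarrow> complex) \<Rightarrow> ('h \<Rightarrow> 'h) set \<Rightarrow> bool" where
  "von_neumann_algebra sc ip M \<longleftrightarrow>
     complex_hilbert sc ip \<and> M \<subseteq> bops sc ip \<and> (\<forall>A\<in>M. hadj ip A \<in> M) \<and>
     commutant sc ip (commutant sc ip M) = M"

definition pos_op ::
  "(complex \<Rightarrow> 'h::ab_group_add \<Rightarrow> 'h) \<Rightarrow> ('h \<Rightarrow> 'h \<Rightarrow> complex) \<Rightarrow> ('h \<Rightarrow> 'h) \<Rightarrow> bool" where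
  "pos_op sc ip A \<longleftrightarrow> A \<in> bops sc ip \<and> (\<forall>x. 0 \<le> ip x (A x))"

definition pos_part ::
  "(complex \<Rightarrow> 'h::ab_group_add \<Rightarrow> 'h) \<Rightarrow> ('h \<Rightarrow> 'h \<Rightarrow> complex) \<Rightarrow> ('h \<Rightarrow> 'h) set \<Rightarrow> ('h \<Rightarrow> 'h) set" where
  "pos_part sc ip M = {A \<in> M. pos_op sc ip A}"

definition op_le ::
  "(complex \<Rightarrow> 'h::ab_group_add \<Rightarrow> 'h) \<Rightarrow> ('h \<Rightarrow> 'h \<Rightarrow> complex) \<Rightarrow> ('h \<Rightarrow> 'h) \<Rightarrow> ('h \<Rightarrow> 'h) \<Rightarrow> bool" where
  "op_le sc ip A B \<longleftrightarrow> A \<in> bops sc ip \<and> B \<in> bops sc ip \<and> pos_op sc ip (\<lambda>x. B x - A x)"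

definition op_sup ::
  "(complex \<Rightarrow> 'h::ab_group_add \<Rightarrow> 'h) \<Rightarrow> ('h \<Rightarrow> 'h \<Rightarrow> complex) \<Rightarrow> ('h \<Rightarrow> 'h) set \<Rightarrow> ('h \<Rightarrow> 'h) \<Rightarrow> bool" where
  "op_sup sc ip D S \<longleftrightarrow> S \<in> bops sc ip \<and> hadj ip S = S \<and> (\<forall>A\<in>D. op_le sc ip A S) \<and>
     (\<forall>U\<in>bops sc ip. hadj ip U = U \<longrightarrow> (\<forall>A\<in>D. op_le sc ip A U) \<longrightarrow> op_le sc ip S U)"

definition matrix_pos ::
  "('h::ab_group_add \<Rightarrow> 'h \<Rightarrow> complex) \<Rightarrow> nat \<Rightarrow> (nat \<Rightarrow> nat \<Rightarrow> 'h \<Rightarrow> 'h) \<Rightarrow> bool" where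
  "matrix_pos ip n a \<longleftrightarrow> (\<forall>\<xi> :: nat \<Rightarrow> 'h. 0 \<le> (\<Sum>i<n. \<Sum>j<n. ip (\<xi> i) (a i j (\<xi> j))))"

definition markov_operator ::
  "(complex \<Rightarrow> 'h::ab_group_add \<Rightarrow> 'h) \<Rightarrow> ('h \<Rightarrow> 'h \<Rightarrow> complex) \<Rightarrow> ('h \<Rightarrow> 'h) set \<Rightarrow>
   (('h \<Rightarrow> 'h) \<Rightarrow> ('h \<Rightarrow> 'h)) \<Rightarrow> bool" where
  "markov_operator sc ip M T \<longleftrightarrow>
     (\<forall>A\<in>M. T A \<in> M) \<and>
     \<comment> \<open>linear\<close>
     (\<forall>A\<in>M. \<forall>B\<in>M. T (\<lambda>x. A x + B x) = (\<lambda>x. T A x + T B x)) \<and>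
     (\<forall>c. \<forall>A\<in>M. T (\<lambda>x. sc c (A x)) = (\<lambda>x. sc c (T A x))) \<and>
     \<comment> \<open>unital\<close>
     T id = id \<and>
     \<comment> \<open>completely positive\<close>
     (\<forall>n a. (\<forall>i<n. \<forall>j<n. a i j \<in> M) \<longrightarrow> matrix_pos ip n a \<longrightarrow>
             matrix_pos ip n (\<lambda>i j. T (a i j))) \<and>
     \<comment> \<open>normal: preserves suprema of bounded upward directed families of positive elements\<close>
     (\<forall>D S. D \<subseteq> pos_part sc ip M \<longrightarrow> D \<noteq> {} \<longrightarrow>
            (\<forall>A\<in>D. \<forall>B\<in>D. \<exists>C\<in>D. op_le sc ip A C \<and> op_le sc ip B C) \<longrightarrow>
            op_sup sc ip D S \<longrightarrow> op_sup sc ip (T ` D) (T S))"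

definition strong_lim ::
  "('h::ab_group_add \<Rightarrow> 'h \<Rightarrow> complex) \<Rightarrow> (nat \<Rightarrow> 'h \<Rightarrow> 'h) \<Rightarrow> ('h \<Rightarrow> 'h) \<Rightarrow> bool" where
  "strong_lim ip X L \<longleftrightarrow> (\<forall>\<xi>. (\<lambda>n. hnorm ip (X n \<xi> - L \<xi>)) \<longlonglongrightarrow> 0)"

definition summable_to ::
  "(complex \<Rightarrow> 'h::ab_group_add \<Rightarrow> 'h) \<Rightarrow> ('h \<Rightarrow> 'h \<Rightarrow> complex) \<Rightarrow> ('h \<Rightarrow> 'h) set \<Rightarrow>
   (('h \<Rightarrow> 'h) \<Rightarrow> ('h \<Rightarrow> 'h)) \<Rightarrow> ('h \<Rightarrow> 'h) \<Rightarrow> ('h \<Rightarrow> 'h) \<Rightarrow> bool" where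
  "summable_to sc ip M S x y \<longleftrightarrow> x \<in> pos_part sc ip M \<and> y \<in> pos_part sc ip M \<and>
     strong_lim ip (\<lambda>m \<xi>. \<Sum>n<m. (S ^^ n) x \<xi>) y"

definition summable_for ::
  "(complex \<Rightarrow> 'h::ab_group_add \<Rightarrow> 'h) \<Rightarrow> ('h \<Rightarrow> 'h \<Rightarrow> complex) \<Rightarrow> ('h \<Rightarrow> 'h) set \<Rightarrow>
   (('h \<Rightarrow> 'h) \<Rightarrow> ('h \<Rightarrow> 'h)) \<Rightarrow> ('h \<Rightarrow> 'h) \<Rightarrow> bool" where
  "summable_for sc ip M S x \<longleftrightarrow> (\<exists>y. summable_to sc ip M S x y)"

definition potential ::
  "(complex \<Rightarrow> 'h::ab_group_add \<Rightarrow> 'h) \<Rightarrow> ('h \<Rightarrow> 'h \<Rightarrow> complex) \<Rightarrow> ('h \<Rightarrow> 'h) set \<Rightarrow>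
   (('h \<Rightarrow> 'h) \<Rightarrow> ('h \<Rightarrow> 'h)) \<Rightarrow> ('h \<Rightarrow> 'h) \<Rightarrow> bool" where
  "potential sc ip M S y \<longleftrightarrow> y \<in> pos_part sc ip M \<and> (\<exists>x. summable_to sc ip M S x y)"

end

theory Submission
  imports Defs
begin


locale hilb =
  fixes sc :: "complex \<Rightarrow> 'h::ab_group_add \<Rightarrow> 'h" and ip :: "'h \<Rightarrow> 'h \<Rightarrow> complex"
  assumes H: "complex_hilbert sc ip"
begin

abbreviation "hn \<equiv> hnorm ip"

lemma ax: "(\<forall>x. sc 1 x = x) \<and>
     (\<forall>a b x. sc a (sc b x) = sc (a * b) x) \<and>
     (\<forall>a x y. sc a (x + y) = sc a x + sc a y) \<and>
     (\<forall>a b x. sc (a + b) x = sc a x + sc b x) \<and>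
     (\<forall>x y z. ip x (y + z) = ip x y + ip x z) \<and>
     (\<forall>a x y. ip x (sc a y) = a * ip x y) \<and>
     (\<forall>x y. ip y x = cnj (ip x y)) \<and>
     (\<forall>x. 0 \<le> ip x x) \<and>
     (\<forall>x. ip x x = 0 \<longrightarrow> x = 0)"
  using H unfolding complex_hilbert_def by (elim conjE) (intro conjI)

lemma sc_one: "sc 1 x = x" using ax[THEN conjunct1] by blast
lemma sc_mult: "sc a (sc b x) = sc (a*b) x" using ax[THEN conjunct2, THEN conjunct1] by blast
lemma sc_add: "sc a (x + y) = sc a x + sc a y" using ax[THEN conjunct2, THEN conjunct2, THEN conjunct1] by blast
lemma sc_add2: "sc (a+b) x = sc a x + sc b x" using ax[THEN conjunct2, THEN conjunct2, THEN conjunct2, THEN conjunct1] by blast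
lemma ip_add_right: "ip x (y + z) = ip x y + ip x z" using ax[THEN conjunct2, THEN conjunct2, THEN conjunct2, THEN conjunct2, THEN conjunct1] by blast
lemma ip_scale_right: "ip x (sc a y) = a * ip x y" using ax[THEN conjunct2, THEN conjunct2, THEN conjunct2, THEN conjunct2, THEN conjunct2, THEN conjunct1] by blast
lemma ip_sym: "ip y x = cnj (ip x y)" using ax[THEN conjunct2, THEN conjunct2, THEN conjunct2, THEN conjunct2, THEN conjunct2, THEN conjunct2, THEN conjunct1] by blast
lemma ip_nonneg: "0 \<le> ip x x" using ax[THEN conjunct2, THEN conjunct2, THEN conjunct2, THEN conjunct2, THEN conjunct2, THEN conjunct2, THEN conjunct2, THEN conjunct1] by blast
lemma ip_zeroD: "ip x x = 0 \<Longrightarrow> x = 0" using ax[THEN conjunct2, THEN conjunct2, THEN conjunct2, THEN conjunct2, THEN conjunct2, THEN conjunct2, THEN conjunct2, THEN conjunct2] by blast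

lemma complete: "(\<forall>e>0. \<exists>M. \<forall>m\<ge>M. \<forall>n\<ge>M. hn (X m - X n) < e) \<Longrightarrow> \<exists>l. (\<lambda>n. hn (X n - l)) \<longlonglongrightarrow> 0"
  using H unfolding complex_hilbert_def by blast

lemma ip_add_left: "ip (x + y) z = ip x z + ip y z"
proof -
  have "ip (x + y) z = cnj (ip z (x + y))" by (rule ip_sym)
  also have "\<dots> = cnj (ip z x) + cnj (ip z y)" by (simp add: ip_add_right)
  also have "\<dots> = ip x z + ip y z" using ip_sym[of x z] ip_sym[of y z] by simp
  finally show ?thesis .
qed

lemma ip_zero_right[simp]: "ip x 0 = 0"
  using ip_add_right[of x 0 0] by simp

lemma ip_zero_left[simp]: "ip 0 x = 0"
  using ip_add_left[of 0 0 x] by simp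

lemma ip_minus_right: "ip x (- y) = - ip x y"
  using ip_add_right[of x y "-y"] by (simp add: add_eq_0_iff)

lemma ip_minus_left: "ip (- x) y = - ip x y"
  using ip_add_left[of x "-x" y] by (simp add: add_eq_0_iff)

lemma ip_diff_right: "ip x (y - z) = ip x y - ip x z"
  using ip_add_right[of x y "-z"] by (simp add: ip_minus_right)

lemma ip_diff_left: "ip (x - y) z = ip x z - ip y z"
  using ip_add_left[of x "-y" z] by (simp add: ip_minus_left)

lemma ip_scale_left: "ip (sc a x) y = cnj a * ip x y"
proof -
  have "ip (sc a x) y = cnj (ip y (sc a x))" by (rule ip_sym)
  also have "\<dots> = cnj a * cnj (ip y x)" by (simp add: ip_scale_right)
  also have "\<dots> = cnj a * ip x y" using ip_sym[of x y] by simp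
  finally show ?thesis .
qed

lemma ip_sum_right: "ip x (\<Sum>i\<in>A. f i) = (\<Sum>i\<in>A. ip x (f i))"
  by (induct A rule: infinite_finite_induct) (auto simp: ip_add_right)

lemma sc_zero_right[simp]: "sc a 0 = 0"
  using sc_add[of a 0 0] by simp

lemma sc_zero_left[simp]: "sc 0 x = 0"
  using sc_add2[of 0 0 x] by simp

lemma sc_minus: "sc a (- x) = - sc a x"
  using sc_add[of a x "-x"] by (simp add: add_eq_0_iff)

lemma sc_diff: "sc a (x - y) = sc a x - sc a y"
  using sc_add[of a x "-y"] by (simp add: sc_minus)

lemma ip_self_Im: "Im (ip x x) = 0"
  using ip_nonneg[of x] by (auto simp: less_eq_complex_def)
lemma ip_self_Re: "0 \<le> Re (ip x x)"
  using ip_nonneg[of x] by (auto simp: less_eq_complex_def)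

lemma ip_self_real: "ip x x = complex_of_real (Re (ip x x))"
  by (simp add: complex_eq_iff ip_self_Im)

lemma hn_nonneg: "0 \<le> hn x"
  by (simp add: hnorm_def ip_self_Re)

lemma hn_sq: "hn x ^ 2 = Re (ip x x)"
  by (simp add: hnorm_def ip_self_Re)

lemma hn_zero_iff: "hn x = 0 \<longleftrightarrow> x = 0"
proof
  assume "hn x = 0"
  then have "Re (ip x x) = 0" using hn_sq[of x] by simp
  then have "ip x x = 0" using ip_self_real[of x] by simp
  then show "x = 0" by (rule ip_zeroD)
qed (simp add: hnorm_def)

lemma hn_minus: "hn (- x) = hn x"
  by (simp add: hnorm_def ip_minus_left ip_minus_right)

lemma hn_commute: "hn (x - y) = hn (y - x)"
  by (metis hn_minus minus_diff_eq)

lemma hn_scale: "hn (sc a x) = cmod a * hn x"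
proof -
  have "ip (sc a x) (sc a x) = cnj a * a * ip x x" by (simp add: ip_scale_left ip_scale_right)
  also have "cnj a * a = complex_of_real (cmod a ^ 2)"
    using complex_norm_square[of a] by (simp add: mult.commute)
  finally have "Re (ip (sc a x) (sc a x)) = cmod a ^ 2 * Re (ip x x)"
    by simp
  then show ?thesis unfolding hnorm_def by (simp add: real_sqrt_mult)
qed

end



lemma quad_real:
  fixes a c p :: real
  assumes H: "\<And>t. 0 \<le> a - 2*t*c + t^2*c*p" and c: "0 \<le> c" and p: "0 \<le> p"
  shows "c \<le> a * p"
proof (cases "p = 0")
  case True
  show ?thesis
  proof (rule ccontr)
    assume "\<not> c \<le> a * p"
    then have "c > 0" using True by simp
    have "0 \<le> a - 2*((a+1)/(2*c))*c" using H[of "(a+1)/(2*c)"] True by simp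
    also have "\<dots> = -1" using \<open>c > 0\<close> by (simp add: field_simps)
    finally show False by simp
  qed
next
  case False
  then have pp: "p > 0" using p by simp
  have "0 \<le> a - 2*(1/p)*c + (1/p)^2*c*p" using H[of "1/p"] .
  also have "\<dots> = a - c/p" using pp by (simp add: field_simps power2_eq_square)
  finally have "c/p \<le> a" by simp
  then show ?thesis using pp by (simp add: divide_le_eq mult.commute)
qed

context hilb
begin

lemma bops_add: "A \<in> bops sc ip \<Longrightarrow> A (x + y) = A x + A y"
  by (simp add: bops_def)
lemma bops_scale: "A \<in> bops sc ip \<Longrightarrow> A (sc a x) = sc a (A x)"
  by (simp add: bops_def)
lemma bops_zero: "A \<in> bops sc ip \<Longrightarrow> A 0 = 0"
  using bops_add[of A 0 0] by simp
lemma bops_minus: "A \<in> bops sc ip \<Longrightarrow> A (- x) = - A x"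
  using bops_add[of A x "-x"] bops_zero[of A] by (simp add: add_eq_0_iff)
lemma bops_diff: "A \<in> bops sc ip \<Longrightarrow> A (x - y) = A x - A y"
  using bops_add[of A x "-y"] bops_minus[of A y] by simp
lemma bops_bound: "A \<in> bops sc ip \<Longrightarrow> \<exists>C\<ge>0. \<forall>x. hn (A x) \<le> C * hn x"
proof -
  assume "A \<in> bops sc ip"
  then obtain C where C: "\<forall>x. hn (A x) \<le> C * hn x" by (auto simp: bops_def)
  have "\<forall>x. hn (A x) \<le> max C 0 * hn x"
  proof
    fix x
    have "C * hn x \<le> max C 0 * hn x" by (rule mult_right_mono) (auto simp: hn_nonneg)
    then show "hn (A x) \<le> max C 0 * hn x" using C by (meson order_trans)
  qed
  then show ?thesis by (intro exI[of _ "max C 0"]) auto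
qed

lemma pos_bops: "pos_op sc ip D \<Longrightarrow> D \<in> bops sc ip"
  by (simp add: pos_op_def)

lemma pos_Im: "pos_op sc ip D \<Longrightarrow> Im (ip x (D x)) = 0"
  by (simp add: pos_op_def less_eq_complex_def)
lemma pos_Re: "pos_op sc ip D \<Longrightarrow> 0 \<le> Re (ip x (D x))"
  by (simp add: pos_op_def less_eq_complex_def)

lemma pos_herm:
  assumes D: "pos_op sc ip D"
  shows "ip a (D b) = cnj (ip b (D a))"
proof -
  have B: "D \<in> bops sc ip" using D by (rule pos_bops)
  define c where "c = sc \<i> b"
  have e1: "ip (a+b) (D (a+b)) = ip a (D a) + ip a (D b) + ip b (D a) + ip b (D b)"
    by (simp add: bops_add[OF B] ip_add_left ip_add_right)
  have e2a: "ip (a+c) (D (a+c)) = ip a (D a) + ip a (D c) + ip c (D a) + ip c (D c)"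
    by (simp add: bops_add[OF B] ip_add_left ip_add_right)
  have "ip a (D c) = \<i> * ip a (D b)"
    by (simp add: c_def bops_scale[OF B] ip_scale_right)
  moreover have "ip c (D a) = - \<i> * ip b (D a)"
    by (simp add: c_def ip_scale_left)
  moreover have "ip c (D c) = ip b (D b)"
    by (simp add: c_def bops_scale[OF B] ip_scale_left ip_scale_right)
  ultimately have e2: "ip (a+c) (D (a+c)) = ip a (D a) + \<i> * ip a (D b) - \<i> * ip b (D a) + ip b (D b)"
    using e2a by simp
  have i1: "Im (ip (a+b) (D (a+b))) = 0" "Im (ip (a+c) (D (a+c))) = 0"
    "Im (ip a (D a)) = 0" "Im (ip b (D b)) = 0" using pos_Im[OF D] by auto
  from e1 have "Im (ip (a+b) (D (a+b))) = Im (ip a (D a)) + Im (ip a (D b)) + Im (ip b (D a)) + Im (ip b (D b))"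
    by simp
  moreover from e2 have "Im (ip (a+c) (D (a+c))) = Im (ip a (D a)) + Re (ip a (D b)) - Re (ip b (D a)) + Im (ip b (D b))"
    by simp
  ultimately have "Im (ip a (D b)) + Im (ip b (D a)) = 0" "Re (ip a (D b)) - Re (ip b (D a)) = 0"
    using i1 by linarith+
  then show ?thesis by (simp add: complex_eq_iff)
qed

lemma cs_pos:
  assumes D: "pos_op sc ip D"
  shows "cmod (ip a (D b)) ^ 2 \<le> Re (ip a (D a)) * Re (ip b (D b))"
proof -
  have B: "D \<in> bops sc ip" using D by (rule pos_bops)
  define w where "w = ip a (D b)"
  have hba: "ip b (D a) = cnj w" unfolding w_def using pos_herm[OF D, of b a] by simp
  have rb: "ip b (D b) = complex_of_real (Re (ip b (D b)))"
    using pos_Im[OF D, of b] by (simp add: complex_eq_iff)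
  have ww: "cnj w * w = complex_of_real (cmod w ^ 2)"
    using complex_norm_square[of w] by (simp add: mult.commute)
  have "\<And>t::real. 0 \<le> Re (ip a (D a)) - 2*t*(cmod w ^ 2) + t^2*(cmod w ^ 2)*Re (ip b (D b))"
  proof -
    fix t :: real
    define s where "s = complex_of_real t * cnj w"
    define v where "v = a - sc s b"
    have Dv: "D v = D a - sc s (D b)" by (simp add: v_def bops_diff[OF B] bops_scale[OF B])
    have "ip v (D v) = ip v (D a - sc s (D b))" using Dv by simp
    also have "\<dots> = ip a (D a - sc s (D b)) - ip (sc s b) (D a - sc s (D b))"
      by (simp add: v_def ip_diff_left)
    also have "\<dots> = (ip a (D a) - s * w) - (cnj s * ip b (D a) - cnj s * (s * ip b (D b)))"
      by (simp add: ip_diff_right ip_scale_left ip_scale_right w_def right_diff_distrib)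
    also have "\<dots> = ip a (D a) - 2 * complex_of_real t * complex_of_real (cmod w ^ 2)
       + complex_of_real (t ^ 2) * complex_of_real (cmod w ^ 2) * complex_of_real (Re (ip b (D b)))"
      apply (subst rb) apply (subst hba)
      apply (simp only: s_def complex_cnj_mult complex_cnj_complex_of_real complex_cnj_cnj flip: ww)
      by (simp add: algebra_simps power2_eq_square)
    also have "\<dots> = complex_of_real (Re (ip a (D a)) - 2*t*(cmod w ^ 2) + t^2*(cmod w ^ 2)*Re (ip b (D b)))
        + \<i> * complex_of_real (Im (ip a (D a)))"
      by (simp add: complex_eq_iff)
    finally have "Re (ip v (D v)) = Re (ip a (D a)) - 2*t*(cmod w ^ 2) + t^2*(cmod w ^ 2)*Re (ip b (D b))"
      by simp
    then show "0 \<le> Re (ip a (D a)) - 2*t*(cmod w ^ 2) + t^2*(cmod w ^ 2)*Re (ip b (D b))"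
      using pos_Re[OF D, of v] by simp
  qed
  then show ?thesis unfolding w_def[symmetric]
    using quad_real[of "Re (ip a (D a))" "cmod w ^ 2" "Re (ip b (D b))"] pos_Re[OF D, of b]
    by simp
qed

lemma id_pos: "pos_op sc ip id"
  unfolding pos_op_def bops_def by (auto simp: ip_nonneg intro: exI[of _ 1])

lemma cs: "cmod (ip a b) \<le> hn a * hn b"
proof -
  have "cmod (ip a b) ^ 2 \<le> (hn a * hn b) ^ 2"
    using cs_pos[OF id_pos, of a b] by (simp add: power_mult_distrib hn_sq)
  then show ?thesis by (rule power2_le_imp_le) (simp add: hn_nonneg)
qed

lemma hn_triangle: "hn (x + y) \<le> hn x + hn y"
proof -
  have "hn (x + y) ^ 2 = hn x ^ 2 + hn y ^ 2 + Re (ip x y) + Re (ip y x)"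
    by (simp add: hn_sq ip_add_left ip_add_right)
  also have "Re (ip y x) = Re (ip x y)" using ip_sym[of y x] by simp
  also have "Re (ip x y) \<le> hn x * hn y" using cs[of x y] complex_Re_le_cmod order_trans by blast
  then have "hn x ^ 2 + hn y ^ 2 + Re (ip x y) + Re (ip x y) \<le> (hn x + hn y) ^ 2"
    by (simp add: power2_eq_square algebra_simps)
  finally show ?thesis
    by (rule power2_le_imp_le) (simp add: hn_nonneg add_nonneg_nonneg)
qed

lemma hn_tri3: "hn (x - z) \<le> hn (x - y) + hn (y - z)"
  using hn_triangle[of "x - y" "y - z"] by simp

lemma ip_tendsto:
  assumes "(\<lambda>m. hn (X m - l)) \<longlonglongrightarrow> 0"
  shows "(\<lambda>m. ip a (X m)) \<longlonglongrightarrow> ip a l"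
proof -
  have "(\<lambda>m. ip a (X m) - ip a l) \<longlonglongrightarrow> 0"
  proof (rule Lim_null_comparison)
    show "\<forall>\<^sub>F m in sequentially. norm (ip a (X m) - ip a l) \<le> hn a * hn (X m - l)"
      using cs[of a] by (simp add: ip_diff_right[symmetric])
    show "(\<lambda>m. hn a * hn (X m - l)) \<longlonglongrightarrow> 0"
      using tendsto_mult_right_zero[OF assms] by simp
  qed
  then show ?thesis by (simp add: LIM_zero_iff)
qed

lemma lim_unique:
  assumes "(\<lambda>m. hn (X m - a)) \<longlonglongrightarrow> 0" "(\<lambda>m. hn (X m - b)) \<longlonglongrightarrow> 0"
  shows "a = b"
proof -
  have le: "hn (a - b) \<le> hn (X m - a) + hn (X m - b)" for m
    using hn_tri3[where x=a and y="X m" and z=b] hn_commute[of a "X m"] by simp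
  have "(\<lambda>m. hn (X m - a) + hn (X m - b)) \<longlonglongrightarrow> 0"
    using tendsto_add[OF assms] by simp
  then have "hn (a - b) \<le> 0"
    using le by (intro tendsto_lowerbound[of _ 0 sequentially]) (auto)
  then have "hn (a - b) = 0" using hn_nonneg[of "a-b"] by simp
  then show ?thesis by (simp add: hn_zero_iff)
qed

end



context hilb
begin

lemma bops_sum_op: "(\<And>i. i \<in> A \<Longrightarrow> f i \<in> bops sc ip) \<Longrightarrow> (\<lambda>\<xi>. \<Sum>i\<in>A. f i \<xi>) \<in> bops sc ip"
proof (induct A rule: infinite_finite_induct)
  case (infinite A)
  then show ?case unfolding bops_def by (auto simp: hnorm_def intro!: exI[of _ 0])
next
  case empty
  then show ?case unfolding bops_def by (auto simp: hnorm_def intro!: exI[of _ 0])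
next
  case (insert x F)
  then have fx: "f x \<in> bops sc ip" and sF: "(\<lambda>\<xi>. \<Sum>i\<in>F. f i \<xi>) \<in> bops sc ip" by auto
  obtain C1 where C1: "C1 \<ge> 0" "\<forall>x'. hn (f x x') \<le> C1 * hn x'" using bops_bound[OF fx] by blast
  obtain C2 where C2: "C2 \<ge> 0" "\<forall>x'. hn (\<Sum>i\<in>F. f i x') \<le> C2 * hn x'" using bops_bound[OF sF] by blast
  have bnd: "hn (f x z + (\<Sum>i\<in>F. f i z)) \<le> (C1 + C2) * hn z" for z
    using hn_triangle[of "f x z" "\<Sum>i\<in>F. f i z"] C1(2)[rule_format, of z] C2(2)[rule_format, of z]
    by (simp add: distrib_right)
  have ad: "f x (a + b) + (\<Sum>i\<in>F. f i (a + b)) = (f x a + (\<Sum>i\<in>F. f i a)) + (f x b + (\<Sum>i\<in>F. f i b))" for a b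
    using bops_add[OF fx, of a b] bops_add[OF sF, of a b] by (simp add: algebra_simps)
  have scl: "f x (sc a b) + (\<Sum>i\<in>F. f i (sc a b)) = sc a (f x b + (\<Sum>i\<in>F. f i b))" for a b
    using bops_scale[OF fx, of a b] bops_scale[OF sF, of a b] by (simp add: sc_add)
  show ?case using insert(1,2) ad scl bnd
    unfolding bops_def by (simp (no_asm_simp)) blast
qed

lemma pos_sum_op: "(\<And>i. i \<in> A \<Longrightarrow> pos_op sc ip (f i)) \<Longrightarrow> pos_op sc ip (\<lambda>\<xi>. \<Sum>i\<in>A. f i \<xi>)"
proof -
  assume a: "\<And>i. i \<in> A \<Longrightarrow> pos_op sc ip (f i)"
  have "(\<lambda>\<xi>. \<Sum>i\<in>A. f i \<xi>) \<in> bops sc ip" using a by (intro bops_sum_op) (simp add: pos_op_def)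
  moreover have "0 \<le> ip x (\<Sum>i\<in>A. f i x)" for x
    unfolding ip_sum_right using a by (intro sum_nonneg) (simp add: pos_op_def)
  ultimately show ?thesis by (simp add: pos_op_def)
qed

lemma bops_diff_op: "A \<in> bops sc ip \<Longrightarrow> B \<in> bops sc ip \<Longrightarrow> (\<lambda>x. A x - B x) \<in> bops sc ip"
proof -
  assume A: "A \<in> bops sc ip" and B: "B \<in> bops sc ip"
  obtain C1 where C1: "C1 \<ge> 0" "\<forall>x'. hn (A x') \<le> C1 * hn x'" using bops_bound[OF A] by blast
  obtain C2 where C2: "C2 \<ge> 0" "\<forall>x'. hn (B x') \<le> C2 * hn x'" using bops_bound[OF B] by blast
  have bnd: "hn (A z - B z) \<le> (C1 + C2) * hn z" for z
    using hn_triangle[of "A z" "- B z"] C1(2)[rule_format, of z] C2(2)[rule_format, of z]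
    by (simp add: distrib_right hn_minus)
  show ?thesis using A B bnd unfolding bops_def by (auto simp: sc_diff)
qed

lemma op_le_trans: "op_le sc ip A B \<Longrightarrow> op_le sc ip B C \<Longrightarrow> op_le sc ip A C"
proof -
  assume 1: "op_le sc ip A B" and 2: "op_le sc ip B C"
  have "(\<lambda>x. C x - A x) = (\<lambda>x. (\<Sum>i\<in>{0::nat,1}. (if i = 0 then (\<lambda>x. C x - B x) else (\<lambda>x. B x - A x)) x))"
    by auto
  moreover have "pos_op sc ip (\<lambda>x. (\<Sum>i\<in>{0::nat,1}. (if i = 0 then (\<lambda>x. C x - B x) else (\<lambda>x. B x - A x)) x))"
    using 1 2 by (intro pos_sum_op) (auto simp: op_le_def)
  ultimately show ?thesis using 1 2 by (simp add: op_le_def)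
qed

lemma key:
  assumes D: "pos_op sc ip D" and K: "0 \<le> K" and bd: "\<And>\<eta>. Re (ip \<eta> (D \<eta>)) \<le> K * hn \<eta> ^ 2"
  shows "hn (D \<xi>) ^ 2 \<le> K * Re (ip \<xi> (D \<xi>))"
proof -
  define \<eta> where "\<eta> = D \<xi>"
  have "cmod (ip \<eta> (D \<xi>)) ^ 2 \<le> Re (ip \<eta> (D \<eta>)) * Re (ip \<xi> (D \<xi>))" by (rule cs_pos[OF D])
  moreover have "cmod (ip \<eta> (D \<xi>)) = hn \<eta> ^ 2"
    unfolding \<eta>_def hn_sq by (subst ip_self_real) (simp add: ip_self_Re)
  moreover have "Re (ip \<eta> (D \<eta>)) * Re (ip \<xi> (D \<xi>)) \<le> (K * hn \<eta> ^ 2) * Re (ip \<xi> (D \<xi>))"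
    using bd[of \<eta>] pos_Re[OF D, of \<xi>] by (rule mult_right_mono)
  ultimately have h0: "hn \<eta> ^ 2 * hn \<eta> ^ 2 \<le> (K * hn \<eta> ^ 2) * Re (ip \<xi> (D \<xi>))"
    by (simp only: power2_eq_square[of "hn \<eta> ^ 2"])
  have h: "hn \<eta> ^ 2 * hn \<eta> ^ 2 \<le> hn \<eta> ^ 2 * (K * Re (ip \<xi> (D \<xi>)))"
    using h0 by (simp only: ac_simps)
  show ?thesis
  proof (cases "hn \<eta> = 0")
    case True
    then show ?thesis using K pos_Re[OF D, of \<xi>] by (simp add: \<eta>_def)
  next
    case False
    then have "hn \<eta> ^ 2 > 0" using hn_nonneg[of \<eta>] by simp
    with h show ?thesis unfolding \<eta>_def using mult_left_le_imp_le by blast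
  qed
qed

lemma lim_nonneg:
  fixes X :: "nat \<Rightarrow> complex"
  assumes "X \<longlonglongrightarrow> l" "eventually (\<lambda>m. 0 \<le> X m) sequentially"
  shows "0 \<le> l"
proof -
  have r: "(\<lambda>m. Re (X m)) \<longlonglongrightarrow> Re l" and i: "(\<lambda>m. Im (X m)) \<longlonglongrightarrow> Im l"
    using assms(1) by (auto intro: tendsto_Re tendsto_Im)
  have e1: "eventually (\<lambda>m. 0 \<le> Re (X m)) sequentially"
    using assms(2) by eventually_elim (simp add: less_eq_complex_def)
  have e2: "eventually (\<lambda>m. Im (X m) = 0) sequentially"
    using assms(2) by eventually_elim (simp add: less_eq_complex_def)
  have "0 \<le> Re l" using r e1 by (rule tendsto_lowerbound) simp
  moreover have "Im l = 0"
  proof -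
    have "(\<lambda>m. Im (X m)) \<longlonglongrightarrow> 0" using e2 by (rule tendsto_eventually)
    then show ?thesis using i LIMSEQ_unique by blast
  qed
  ultimately show ?thesis by (simp add: less_eq_complex_def)
qed

lemma slim_ip:
  assumes "strong_lim ip S y"
  shows "(\<lambda>m. ip \<xi> (V \<xi> - S m \<xi>)) \<longlonglongrightarrow> ip \<xi> (V \<xi> - y \<xi>)"
proof (rule ip_tendsto)
  have "hn ((V \<xi> - S m \<xi>) - (V \<xi> - y \<xi>)) = hn (S m \<xi> - y \<xi>)" for m
    using hn_commute[of "y \<xi>" "S m \<xi>"] by (simp add: algebra_simps)
  then show "(\<lambda>m. hn ((V \<xi> - S m \<xi>) - (V \<xi> - y \<xi>))) \<longlonglongrightarrow> 0"
    using assms unfolding strong_lim_def by simp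
qed

lemma slim_ip2:
  assumes "strong_lim ip S y"
  shows "(\<lambda>m. ip \<xi> (S m \<xi> - V \<xi>)) \<longlonglongrightarrow> ip \<xi> (y \<xi> - V \<xi>)"
proof (rule ip_tendsto)
  have "hn ((S m \<xi> - V \<xi>) - (y \<xi> - V \<xi>)) = hn (S m \<xi> - y \<xi>)" for m
    by (simp add: algebra_simps)
  then show "(\<lambda>m. hn ((S m \<xi> - V \<xi>) - (y \<xi> - V \<xi>))) \<longlonglongrightarrow> 0"
    using assms unfolding strong_lim_def by simp
qed

lemma hadj_eq:
  assumes "\<And>a b. ip (y a) b = ip a (y b)"
  shows "hadj ip y = y"
  unfolding hadj_def
proof (rule the_equality)
  show "\<forall>x z. ip (y x) z = ip x (y z)" using assms by blast
  fix B assume B: "\<forall>x z. ip (y x) z = ip x (B z)"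
  show "B = y"
  proof
    fix z
    have "ip (B z - y z) (B z - y z) = 0" using B assms by (simp add: ip_diff_right)
    then show "B z = y z" using ip_zeroD[of "B z - y z"] by simp
  qed
qed

lemma sup_of_lim:
  assumes S: "\<And>m. pos_op sc ip (S m)"
    and mono: "\<And>m m'. m \<le> m' \<Longrightarrow> op_le sc ip (S m) (S m')"
    and lim: "strong_lim ip S y" and yb: "y \<in> bops sc ip"
  shows "op_sup sc ip (range S) y"
proof -
  have lim0: "(\<lambda>m. hn (S m \<xi> - y \<xi>)) \<longlonglongrightarrow> 0" for \<xi> using lim by (simp add: strong_lim_def)
  have sym: "ip (y a) b = ip a (y b)" for a b
  proof -
    have 1: "(\<lambda>m. ip a (S m b)) \<longlonglongrightarrow> ip a (y b)" by (rule ip_tendsto[OF lim0])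
    have "(\<lambda>m. cnj (ip b (S m a))) \<longlonglongrightarrow> cnj (ip b (y a))"
      by (rule tendsto_cnj, rule ip_tendsto[OF lim0])
    moreover have "cnj (ip b (S m a)) = ip a (S m b)" for m by (subst pos_herm[OF S]) simp
    ultimately have "(\<lambda>m. ip a (S m b)) \<longlonglongrightarrow> cnj (ip b (y a))" by simp
    with 1 have "ip a (y b) = cnj (ip b (y a))" using LIMSEQ_unique by blast
    then show ?thesis using ip_sym[of "y a" b] by simp
  qed
  have "op_le sc ip (S m) y" for m
  proof -
    have "0 \<le> ip \<xi> (y \<xi> - S m \<xi>)" for \<xi>
    proof (rule lim_nonneg[OF slim_ip2[OF lim, of \<xi> "S m"]])
      show "eventually (\<lambda>m'. 0 \<le> ip \<xi> (S m' \<xi> - S m \<xi>)) sequentially"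
        using eventually_ge_at_top[of m]
        by eventually_elim (use mono in \<open>auto simp: op_le_def pos_op_def\<close>)
    qed
    then show ?thesis using yb pos_bops[OF S] bops_diff_op[OF yb pos_bops[OF S]]
      by (simp add: op_le_def pos_op_def)
  qed
  moreover have "op_le sc ip y U" if U: "U \<in> bops sc ip" "\<forall>A\<in>range S. op_le sc ip A U" for U
  proof -
    have "0 \<le> ip \<xi> (U \<xi> - y \<xi>)" for \<xi>
    proof (rule lim_nonneg[OF slim_ip[OF lim, of \<xi> U]])
      show "eventually (\<lambda>m'. 0 \<le> ip \<xi> (U \<xi> - S m' \<xi>)) sequentially"
        using U(2) by (auto simp: op_le_def pos_op_def)
    qed
    then show ?thesis using yb U bops_diff_op[OF U(1) yb]
      by (simp add: op_le_def pos_op_def)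
  qed
  ultimately show ?thesis unfolding op_sup_def using yb hadj_eq[OF sym] by auto
qed

end



context hilb
begin

lemma hn_null:
  assumes "\<And>m. hn (X m) \<le> g m" "g \<longlonglongrightarrow> 0"
  shows "(\<lambda>m. hn (X m)) \<longlonglongrightarrow> 0"
  using assms(2) by (rule Lim_null_comparison[rotated]) (use assms(1) hn_nonneg in auto)

lemma bound_re:
  assumes "B \<in> bops sc ip" "0 \<le> C" "\<forall>x. hn (B x) \<le> C * hn x"
  shows "Re (ip \<eta> (B \<eta>)) \<le> C * hn \<eta> ^ 2"
proof -
  have "Re (ip \<eta> (B \<eta>)) \<le> cmod (ip \<eta> (B \<eta>))" by (rule complex_Re_le_cmod)
  also have "\<dots> \<le> hn \<eta> * hn (B \<eta>)" by (rule cs)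
  also have "\<dots> \<le> hn \<eta> * (C * hn \<eta>)" using assms(3) hn_nonneg by (simp add: mult_left_mono)
  finally show ?thesis by (simp add: power2_eq_square ac_simps)
qed

lemma le_Re: "op_le sc ip A B \<Longrightarrow> Re (ip \<xi> (A \<xi>)) \<le> Re (ip \<xi> (B \<xi>))"
  using pos_Re[of "\<lambda>x. B x - A x" \<xi>] by (simp add: op_le_def ip_diff_right)

lemma lim_of_forms:
  assumes S: "\<And>m. pos_op sc ip (S m)" and B: "B \<in> bops sc ip" and le: "\<And>m. op_le sc ip (S m) B"
    and q: "\<And>\<xi>. (\<lambda>m. Re (ip \<xi> (S m \<xi>))) \<longlonglongrightarrow> Re (ip \<xi> (B \<xi>))"
  shows "strong_lim ip S B"
  unfolding strong_lim_def
proof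
  fix \<xi>
  obtain C where C: "C \<ge> 0" "\<forall>x. hn (B x) \<le> C * hn x" using bops_bound[OF B] by blast
  have Dpos: "pos_op sc ip (\<lambda>x. B x - S m x)" for m using le[of m] by (simp add: op_le_def)
  have Dk: "hn (B \<xi> - S m \<xi>) ^ 2 \<le> C * (Re (ip \<xi> (B \<xi>)) - Re (ip \<xi> (S m \<xi>)))" for m
  proof -
    have "hn ((\<lambda>x. B x - S m x) \<xi>) ^ 2 \<le> C * Re (ip \<xi> ((\<lambda>x. B x - S m x) \<xi>))"
    proof (rule key[OF Dpos C(1)])
      fix \<eta>
      have "Re (ip \<eta> (B \<eta> - S m \<eta>)) = Re (ip \<eta> (B \<eta>)) - Re (ip \<eta> (S m \<eta>))"
        by (simp add: ip_diff_right)
      also have "\<dots> \<le> Re (ip \<eta> (B \<eta>))" using pos_Re[OF S] by simp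
      also have "\<dots> \<le> C * hn \<eta> ^ 2" by (rule bound_re[OF B C])
      finally show "Re (ip \<eta> ((\<lambda>x. B x - S m x) \<eta>)) \<le> C * hn \<eta> ^ 2" by simp
    qed
    then show ?thesis by (simp add: ip_diff_right)
  qed
  have t: "(\<lambda>m. C * (Re (ip \<xi> (B \<xi>)) - Re (ip \<xi> (S m \<xi>)))) \<longlonglongrightarrow> 0"
  proof -
    have "(\<lambda>m. Re (ip \<xi> (B \<xi>)) - Re (ip \<xi> (S m \<xi>))) \<longlonglongrightarrow> Re (ip \<xi> (B \<xi>)) - Re (ip \<xi> (B \<xi>))"
      by (intro tendsto_diff tendsto_const q)
    then show ?thesis using tendsto_mult_right_zero[of _ sequentially C] by simp
  qed
  have "(\<lambda>m. hn (B \<xi> - S m \<xi>) ^ 2) \<longlonglongrightarrow> 0"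
    using t by (rule Lim_null_comparison[rotated]) (use Dk in auto)
  then have "(\<lambda>m. sqrt (hn (B \<xi> - S m \<xi>) ^ 2)) \<longlonglongrightarrow> sqrt 0" by (rule tendsto_real_sqrt)
  then show "(\<lambda>m. hn (S m \<xi> - B \<xi>)) \<longlonglongrightarrow> 0"
    using hn_nonneg by (simp add: hn_commute[of "S _ \<xi>"])
qed

lemma lim_of_sup:
  assumes S: "\<And>m. pos_op sc ip (S m)"
    and mono: "\<And>m m'. m \<le> m' \<Longrightarrow> op_le sc ip (S m) (S m')"
    and sup: "op_sup sc ip (range S) B"
  shows "strong_lim ip S B"
proof -
  have B: "B \<in> bops sc ip" and hB: "hadj ip B = B" and leB: "\<And>m. op_le sc ip (S m) B"
    using sup by (auto simp: op_sup_def)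
  obtain C where C: "C \<ge> 0" "\<forall>x. hn (B x) \<le> C * hn x" using bops_bound[OF B] by blast
  define q where "q \<xi> m = Re (ip \<xi> (S m \<xi>))" for \<xi> m
  have q0: "0 \<le> q \<xi> m" for \<xi> m unfolding q_def by (rule pos_Re[OF S])
  have qB: "q \<xi> m \<le> C * hn \<xi> ^ 2" for \<xi> m
    using le_Re[OF leB, of \<xi> m] bound_re[OF B C, of \<xi>] unfolding q_def by linarith
  have Dk: "hn (S m' \<xi> - S m \<xi>) ^ 2 \<le> C * (q \<xi> m' - q \<xi> m)" if "m \<le> m'" for m m' \<xi>
  proof -
    have Dpos: "pos_op sc ip (\<lambda>x. S m' x - S m x)" using mono[OF that] by (simp add: op_le_def)
    have "hn ((\<lambda>x. S m' x - S m x) \<xi>) ^ 2 \<le> C * Re (ip \<xi> ((\<lambda>x. S m' x - S m x) \<xi>))"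
    proof (rule key[OF Dpos C(1)])
      fix \<eta>
      have "Re (ip \<eta> (S m' \<eta> - S m \<eta>)) = q \<eta> m' - q \<eta> m"
        by (simp add: ip_diff_right q_def)
      also have "\<dots> \<le> C * hn \<eta> ^ 2" using q0[of \<eta> m] qB[of \<eta> m'] by linarith
      finally show "Re (ip \<eta> ((\<lambda>x. S m' x - S m x) \<eta>)) \<le> C * hn \<eta> ^ 2" by simp
    qed
    then show ?thesis by (simp add: ip_diff_right q_def)
  qed
  have Sbound: "hn (S m \<xi>) \<le> C * hn \<xi>" for m \<xi>
  proof -
    have "hn (S m \<xi>) ^ 2 \<le> C * Re (ip \<xi> (S m \<xi>))"
    proof (rule key[OF S C(1)])
      fix \<eta> show "Re (ip \<eta> (S m \<eta>)) \<le> C * hn \<eta> ^ 2" using qB[of \<eta> m] by (simp add: q_def)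
    qed
    also have "\<dots> \<le> C * (C * hn \<xi> ^ 2)" using qB[of \<xi> m] C(1) by (simp add: q_def mult_left_mono)
    also have "\<dots> = (C * hn \<xi>) ^ 2" by (simp add: power2_eq_square)
    finally show ?thesis by (rule power2_le_imp_le) (simp add: C(1) hn_nonneg)
  qed
  have exl: "\<exists>l. (\<lambda>m. hn (S m \<xi> - l)) \<longlonglongrightarrow> 0" for \<xi>
  proof (rule complete, intro allI impI)
    fix e :: real assume e: "e > 0"
    have inc: "incseq (q \<xi>)"
      unfolding incseq_def q_def using le_Re[OF mono] by blast
    obtain Lq where "q \<xi> \<longlonglongrightarrow> Lq"
      using incseq_convergent[OF inc, of "C * hn \<xi> ^ 2"] qB by blast
    then have "Cauchy (q \<xi>)" by (rule LIMSEQ_imp_Cauchy)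
    then obtain M where M: "\<forall>m\<ge>M. \<forall>n\<ge>M. norm (q \<xi> m - q \<xi> n) < e^2 / (C + 1)"
      using CauchyD[of "q \<xi>" "e^2/(C+1)"] e C(1) by auto
    have one: "hn (S n \<xi> - S m \<xi>) < e" if "M \<le> m" "m \<le> n" for m n
    proof -
      have "hn (S n \<xi> - S m \<xi>) ^ 2 \<le> C * (q \<xi> n - q \<xi> m)" by (rule Dk[OF that(2)])
      also have "\<dots> \<le> C * (e^2 / (C + 1))"
      proof (rule mult_left_mono[OF _ C(1)])
        have "norm (q \<xi> n - q \<xi> m) < e^2 / (C + 1)" using M that by simp
        then show "q \<xi> n - q \<xi> m \<le> e^2 / (C + 1)" by simp
      qed
      also have "\<dots> < e ^ 2"
      proof -
        have "C * (e^2 / (C + 1)) = e^2 * (C / (C + 1))" by simp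
        also have "\<dots> < e^2 * 1" using C(1) e by (intro mult_strict_left_mono) auto
        finally show ?thesis by simp
      qed
      finally show ?thesis by (rule power2_less_imp_less) (use e in simp)
    qed
    show "\<exists>M. \<forall>m\<ge>M. \<forall>n\<ge>M. hn (S m \<xi> - S n \<xi>) < e"
    proof (intro exI allI impI)
      fix m n assume "M \<le> m" "M \<le> n"
      then show "hn (S m \<xi> - S n \<xi>) < e"
        using one[of n m] one[of m n] hn_commute[of "S m \<xi>" "S n \<xi>"] by (cases "m \<le> n") auto
    qed
  qed
  define L where "L \<xi> = (SOME l. (\<lambda>m. hn (S m \<xi> - l)) \<longlonglongrightarrow> 0)" for \<xi>
  have L: "(\<lambda>m. hn (S m \<xi> - L \<xi>)) \<longlonglongrightarrow> 0" for \<xi>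
    unfolding L_def using exl by (rule someI_ex)
  have Sb: "S m \<in> bops sc ip" for m by (rule pos_bops[OF S])
  have Ladd: "L (a + b) = L a + L b" for a b
  proof (rule lim_unique[OF L])
    show "(\<lambda>m. hn (S m (a + b) - (L a + L b))) \<longlonglongrightarrow> 0"
    proof (rule hn_null)
      show "hn (S m (a + b) - (L a + L b)) \<le> hn (S m a - L a) + hn (S m b - L b)" for m
        using hn_triangle[of "S m a - L a" "S m b - L b"] by (simp add: bops_add[OF Sb] algebra_simps)
      show "(\<lambda>m. hn (S m a - L a) + hn (S m b - L b)) \<longlonglongrightarrow> 0"
        using tendsto_add[OF L L] by simp
    qed
  qed
  have Lsc: "L (sc c a) = sc c (L a)" for c a
  proof (rule lim_unique[OF L])
    show "(\<lambda>m. hn (S m (sc c a) - sc c (L a))) \<longlonglongrightarrow> 0"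
    proof (rule hn_null)
      show "hn (S m (sc c a) - sc c (L a)) \<le> cmod c * hn (S m a - L a)" for m
        using hn_scale[of c "S m a - L a"] by (simp add: bops_scale[OF Sb] sc_diff)
      show "(\<lambda>m. cmod c * hn (S m a - L a)) \<longlonglongrightarrow> 0"
        using tendsto_mult_right_zero[OF L] by simp
    qed
  qed
  have Lbd: "hn (L x) \<le> C * hn x" for x
  proof -
    have "(\<lambda>m. C * hn x + hn (S m x - L x)) \<longlonglongrightarrow> C * hn x + 0"
      by (intro tendsto_add tendsto_const L)
    moreover have "hn (L x) \<le> C * hn x + hn (S m x - L x)" for m
      using hn_tri3[where x="L x" and y="S m x" and z=0] Sbound[of m x] hn_commute[of "L x" "S m x"]
      by simp
    ultimately have "hn (L x) \<le> C * hn x + 0"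
      by (intro tendsto_lowerbound[of "\<lambda>m. C * hn x + hn (S m x - L x)" "C * hn x + 0" sequentially]) auto
    then show ?thesis by simp
  qed
  have Lb: "L \<in> bops sc ip" using Ladd Lsc Lbd unfolding bops_def by blast
  have supL: "op_sup sc ip (range S) L"
    using sup_of_lim[OF S mono _ Lb] L by (simp add: strong_lim_def)
  have LB: "op_le sc ip L B" using supL B hB leB by (auto simp: op_sup_def)
  have BL: "op_le sc ip B L" using supL sup by (auto simp: op_sup_def)
  have "L = B"
  proof
    fix \<xi>
    have Dpos: "pos_op sc ip (\<lambda>x. L x - B x)" using BL by (simp add: op_le_def)
    have "hn ((\<lambda>x. L x - B x) \<xi>) ^ 2 \<le> 0 * Re (ip \<xi> ((\<lambda>x. L x - B x) \<xi>))"
    proof (rule key[OF Dpos])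
      fix \<eta>
      show "Re (ip \<eta> ((\<lambda>x. L x - B x) \<eta>)) \<le> 0 * hn \<eta> ^ 2"
        using le_Re[OF LB, of \<eta>] by (simp add: ip_diff_right)
    qed simp
    then have "hn (L \<xi> - B \<xi>) = 0" using hn_nonneg[of "L \<xi> - B \<xi>"] by simp
    then show "L \<xi> = B \<xi>" by (simp add: hn_zero_iff)
  qed
  then show ?thesis using L by (simp add: strong_lim_def)
qed

end



context hilb
begin

lemma psum_mono:
  fixes m m' :: nat
  assumes f: "\<And>n. pos_op sc ip (f n)" and mm: "m \<le> m'"
  shows "op_le sc ip (\<lambda>\<xi>. \<Sum>n<m. f n \<xi>) (\<lambda>\<xi>. \<Sum>n<m'. f n \<xi>)"
proof -
  have eq: "(\<Sum>n<m'. f n \<xi>) - (\<Sum>n<m. f n \<xi>) = (\<Sum>n\<in>{m..<m'}. f n \<xi>)" for \<xi>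
    proof -
    have h: "(\<Sum>n<m. f n \<xi>) + (\<Sum>n\<in>{m..<m'}. f n \<xi>) = (\<Sum>n<m'. f n \<xi>)"
      using sum.atLeastLessThan_concat[of 0 m m' "\<lambda>n. f n \<xi>"] mm by (simp add: atLeast0LessThan)
    show ?thesis unfolding h[symmetric] by simp
  qed
  have "pos_op sc ip (\<lambda>\<xi>. \<Sum>n\<in>{m..<m'}. f n \<xi>)" using f by (intro pos_sum_op)
  then show ?thesis unfolding op_le_def eq
    using pos_bops[OF pos_sum_op[of "{..<m}" f]] pos_bops[OF pos_sum_op[of "{..<m'}" f]] f by auto
qed

lemma psum_pos: "(\<And>n. pos_op sc ip (f n)) \<Longrightarrow> pos_op sc ip (\<lambda>\<xi>. \<Sum>n<m. f n \<xi>)"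
  by (intro pos_sum_op)

lemma hn_sum: "hn (\<Sum>i\<in>I. v i) \<le> (\<Sum>i\<in>I. hn (v i))"
proof (induct I rule: infinite_finite_induct)
  case (insert x F)
  then show ?case using hn_triangle[of "v x" "\<Sum>i\<in>F. v i"] by simp
qed (auto simp: hnorm_def)

lemma strong_lim_sum:
  assumes "\<And>k. k \<in> I \<Longrightarrow> strong_lim ip (X k) (Y k)"
  shows "strong_lim ip (\<lambda>m \<xi>. \<Sum>k\<in>I. X k m \<xi>) (\<lambda>\<xi>. \<Sum>k\<in>I. Y k \<xi>)"
  unfolding strong_lim_def
proof
  fix \<xi>
  show "(\<lambda>m. hn ((\<Sum>k\<in>I. X k m \<xi>) - (\<Sum>k\<in>I. Y k \<xi>))) \<longlonglongrightarrow> 0"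
  proof (rule hn_null)
    show "hn ((\<Sum>k\<in>I. X k m \<xi>) - (\<Sum>k\<in>I. Y k \<xi>)) \<le> (\<Sum>k\<in>I. hn (X k m \<xi> - Y k \<xi>))" for m
      using hn_sum[of "\<lambda>k. X k m \<xi> - Y k \<xi>" I] by (simp add: sum_subtractf)
    show "(\<lambda>m. \<Sum>k\<in>I. hn (X k m \<xi> - Y k \<xi>)) \<longlonglongrightarrow> 0"
      using assms by (intro tendsto_null_sum) (simp add: strong_lim_def)
  qed
qed

end

locale vnm = hilb sc ip
  for sc :: "complex \<Rightarrow> 'h::ab_group_add \<Rightarrow> 'h" and ip +
  fixes M :: "('h \<Rightarrow> 'h) set" and T :: "('h \<Rightarrow> 'h) \<Rightarrow> ('h \<Rightarrow> 'h)"
  assumes VN: "von_neumann_algebra sc ip M" and MK: "markov_operator sc ip M T"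
begin

lemma M_bops: "A \<in> M \<Longrightarrow> A \<in> bops sc ip"
  using VN by (auto simp: von_neumann_algebra_def)

lemma M_bicomm: "commutant sc ip (commutant sc ip M) = M"
  using VN by (simp add: von_neumann_algebra_def)

lemma M_intro:
  assumes "A \<in> bops sc ip" "\<And>C. C \<in> commutant sc ip M \<Longrightarrow> C \<circ> A = A \<circ> C"
  shows "A \<in> M"
proof -
  have "A \<in> commutant sc ip (commutant sc ip M)"
    using assms unfolding commutant_def[of _ _ "commutant sc ip M"] by auto
  then show ?thesis using M_bicomm by simp
qed

lemma comm_eq: "C \<in> commutant sc ip M \<Longrightarrow> A \<in> M \<Longrightarrow> C (A x) = A (C x)"
  unfolding commutant_def by (auto dest!: bspec[of _ _ A] simp: fun_eq_iff)

lemma comm_bops: "C \<in> commutant sc ip M \<Longrightarrow> C \<in> bops sc ip"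
  unfolding commutant_def by auto

lemma M_zero: "(\<lambda>x. 0) \<in> M"
proof (rule M_intro)
  show "(\<lambda>x. 0) \<in> bops sc ip" unfolding bops_def by (auto simp: hnorm_def intro!: exI[of _ 0])
  fix C assume "C \<in> commutant sc ip M"
  then show "C \<circ> (\<lambda>x. 0) = (\<lambda>x. 0) \<circ> C" using bops_zero[OF comm_bops] by (auto simp: fun_eq_iff)
qed

lemma M_add: "A \<in> M \<Longrightarrow> B \<in> M \<Longrightarrow> (\<lambda>x. A x + B x) \<in> M"
proof (rule M_intro)
  assume A: "A \<in> M" and B: "B \<in> M"
  have "(\<lambda>x. \<Sum>i\<in>{0::nat,1}. (if i = 0 then A else B) x) \<in> bops sc ip"
    using A B by (intro bops_sum_op) (auto simp: M_bops)
  then show "(\<lambda>x. A x + B x) \<in> bops sc ip" by simp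
  fix C assume C: "C \<in> commutant sc ip M"
  show "C \<circ> (\<lambda>x. A x + B x) = (\<lambda>x. A x + B x) \<circ> C"
    using comm_eq[OF C A] comm_eq[OF C B] bops_add[OF comm_bops[OF C]] by (auto simp: fun_eq_iff)
qed

lemma M_diff: "A \<in> M \<Longrightarrow> B \<in> M \<Longrightarrow> (\<lambda>x. A x - B x) \<in> M"
proof (rule M_intro)
  assume A: "A \<in> M" and B: "B \<in> M"
  show "(\<lambda>x. A x - B x) \<in> bops sc ip" using A B by (intro bops_diff_op) (auto simp: M_bops)
  fix C assume C: "C \<in> commutant sc ip M"
  show "C \<circ> (\<lambda>x. A x - B x) = (\<lambda>x. A x - B x) \<circ> C"
    using comm_eq[OF C A] comm_eq[OF C B] bops_diff[OF comm_bops[OF C]] by (auto simp: fun_eq_iff)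
qed

lemma M_sum: "(\<And>i. i \<in> I \<Longrightarrow> f i \<in> M) \<Longrightarrow> (\<lambda>x. \<Sum>i\<in>I. f i x) \<in> M"
proof (induct I rule: infinite_finite_induct)
  case (insert a F)
  then have "(\<lambda>x. f a x + (\<Sum>i\<in>F. f i x)) \<in> M" by (intro M_add) auto
  then show ?case using insert by simp
qed (simp_all add: M_zero)

lemma MK1: "\<forall>A\<in>M. T A \<in> M"
  using MK unfolding markov_operator_def by (rule conjunct1)
lemma MK2: "\<forall>A\<in>M. \<forall>B\<in>M. T (\<lambda>x. A x + B x) = (\<lambda>x. T A x + T B x)"
  using MK unfolding markov_operator_def by (rule conjunct2[THEN conjunct1])
lemma MK5: "\<forall>n a. (\<forall>i<n. \<forall>j<n. a i j \<in> M) \<longrightarrow> matrix_pos ip n a \<longrightarrow> matrix_pos ip n (\<lambda>i j. T (a i j))"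
  using MK unfolding markov_operator_def by (rule conjunct2[THEN conjunct2, THEN conjunct2, THEN conjunct2, THEN conjunct1])
lemma MK6: "\<forall>D S. D \<subseteq> pos_part sc ip M \<longrightarrow> D \<noteq> {} \<longrightarrow>
            (\<forall>A\<in>D. \<forall>B\<in>D. \<exists>C\<in>D. op_le sc ip A C \<and> op_le sc ip B C) \<longrightarrow>
            op_sup sc ip D S \<longrightarrow> op_sup sc ip (T ` D) (T S)"
  using MK unfolding markov_operator_def by (rule conjunct2[THEN conjunct2, THEN conjunct2, THEN conjunct2, THEN conjunct2])

lemma T_M: "A \<in> M \<Longrightarrow> T A \<in> M"
  using MK1 by blast

lemma T_add: "A \<in> M \<Longrightarrow> B \<in> M \<Longrightarrow> T (\<lambda>x. A x + B x) = (\<lambda>x. T A x + T B x)"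
  using MK2 by blast

lemma T_zero: "T (\<lambda>x. 0) = (\<lambda>x. 0)"
proof -
  have "T (\<lambda>x. 0 + 0) = (\<lambda>x. T (\<lambda>x. 0) x + T (\<lambda>x. 0) x)" using T_add[OF M_zero M_zero] .
  then show ?thesis by (auto simp: fun_eq_iff)
qed

lemma T_diff: "A \<in> M \<Longrightarrow> B \<in> M \<Longrightarrow> T (\<lambda>x. A x - B x) = (\<lambda>x. T A x - T B x)"
proof -
  assume A: "A \<in> M" and B: "B \<in> M"
  have "T (\<lambda>x. B x + (A x - B x)) = (\<lambda>x. T B x + T (\<lambda>x. A x - B x) x)"
    using T_add[OF B M_diff[OF A B]] .
  then show ?thesis by (auto simp: fun_eq_iff algebra_simps)
qed

lemma T_sum: "(\<And>i. i \<in> I \<Longrightarrow> f i \<in> M) \<Longrightarrow> T (\<lambda>x. \<Sum>i\<in>I. f i x) = (\<lambda>x. \<Sum>i\<in>I. T (f i) x)"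
proof (induct I rule: infinite_finite_induct)
  case (insert a F)
  then have "T (\<lambda>x. f a x + (\<Sum>i\<in>F. f i x)) = (\<lambda>x. T (f a) x + T (\<lambda>x. \<Sum>i\<in>F. f i x) x)"
    by (intro T_add M_sum) auto
  then show ?case using insert by simp
qed (simp_all add: T_zero)

lemma T_pos: "A \<in> pos_part sc ip M \<Longrightarrow> T A \<in> pos_part sc ip M"
proof -
  assume A: "A \<in> pos_part sc ip M"
  have cp: "\<forall>n a. (\<forall>i<n. \<forall>j<n. a i j \<in> M) \<longrightarrow> matrix_pos ip n a \<longrightarrow> matrix_pos ip n (\<lambda>i j. T (a i j))"
    by (rule MK5)
  have "matrix_pos ip 1 (\<lambda>i j. A)" using A by (simp add: matrix_pos_def pos_part_def pos_op_def)
  then have "matrix_pos ip 1 (\<lambda>i j. T A)" using cp A by (auto simp: pos_part_def)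
  then have "0 \<le> ip x (T A x)" for x unfolding matrix_pos_def by (auto dest: spec[of _ "\<lambda>_. x"])
  moreover have "T A \<in> M" using A T_M by (simp add: pos_part_def)
  ultimately show ?thesis by (simp add: pos_part_def pos_op_def M_bops)
qed

lemma Tk_M: "A \<in> M \<Longrightarrow> (T ^^ k) A \<in> M"
  by (induct k) (auto simp: T_M)

lemma Tk_pos: "A \<in> pos_part sc ip M \<Longrightarrow> (T ^^ k) A \<in> pos_part sc ip M"
  by (induct k) (auto simp: T_pos)

lemma Tk_zero: "(T ^^ k) (\<lambda>x. 0) = (\<lambda>x. 0)"
  by (induct k) (auto simp: T_zero)

lemma Tk_sum: "(\<And>i. i \<in> I \<Longrightarrow> f i \<in> M) \<Longrightarrow> (T ^^ k) (\<lambda>x. \<Sum>i\<in>I. f i x) = (\<lambda>x. \<Sum>i\<in>I. (T ^^ k) (f i) x)"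
proof (induct k)
  case (Suc k)
  then show ?case using T_sum[of I "\<lambda>i. (T ^^ k) (f i)"] Tk_M by simp
qed simp

lemma T_mono: "A \<in> M \<Longrightarrow> B \<in> M \<Longrightarrow> op_le sc ip A B \<Longrightarrow> op_le sc ip (T A) (T B)"
proof -
  assume A: "A \<in> M" and B: "B \<in> M" and le: "op_le sc ip A B"
  have "(\<lambda>x. B x - A x) \<in> pos_part sc ip M" using le M_diff[OF B A] by (simp add: pos_part_def op_le_def)
  then have "T (\<lambda>x. B x - A x) \<in> pos_part sc ip M" by (rule T_pos)
  then show ?thesis using T_diff[OF B A] T_M A B M_bops by (simp add: pos_part_def op_le_def)
qed

lemma Tk_mono: "A \<in> M \<Longrightarrow> B \<in> M \<Longrightarrow> op_le sc ip A B \<Longrightarrow> op_le sc ip ((T ^^ k) A) ((T ^^ k) B)"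
  by (induct k) (auto intro: T_mono Tk_M)

lemma normal_iter:
  fixes S :: "nat \<Rightarrow> 'h \<Rightarrow> 'h"
  assumes S: "\<And>m. S m \<in> pos_part sc ip M" and mono: "\<And>m m'. m \<le> m' \<Longrightarrow> op_le sc ip (S m) (S m')"
    and sup: "op_sup sc ip (range S) y"
  shows "op_sup sc ip (range (\<lambda>m. (T ^^ k) (S m))) ((T ^^ k) y)"
proof (induct k)
  case 0
  then show ?case using sup by simp
next
  case (Suc k)
  have nrm: "\<forall>D S. D \<subseteq> pos_part sc ip M \<longrightarrow> D \<noteq> {} \<longrightarrow>
            (\<forall>A\<in>D. \<forall>B\<in>D. \<exists>C\<in>D. op_le sc ip A C \<and> op_le sc ip B C) \<longrightarrow>
            op_sup sc ip D S \<longrightarrow> op_sup sc ip (T ` D) (T S)"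
    by (rule MK6)
  let ?D = "range (\<lambda>m. (T ^^ k) (S m))"
  have SM: "S m \<in> M" for m using S by (simp add: pos_part_def)
  have "?D \<subseteq> pos_part sc ip M" using S Tk_pos by auto
  moreover have "?D \<noteq> {}" by simp
  moreover have "\<forall>A\<in>?D. \<forall>B\<in>?D. \<exists>C\<in>?D. op_le sc ip A C \<and> op_le sc ip B C"
  proof (intro ballI)
    fix A B assume "A \<in> ?D" "B \<in> ?D"
    then obtain a b where ab: "A = (T ^^ k) (S a)" "B = (T ^^ k) (S b)" by auto
    show "\<exists>C\<in>?D. op_le sc ip A C \<and> op_le sc ip B C"
      using ab Tk_mono[OF SM SM mono[OF max.cobounded1[of a b]], of k] Tk_mono[OF SM SM mono[OF max.cobounded2[of b a]], of k]
      by (intro bexI[of _ "(T ^^ k) (S (max a b))"]) auto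
  qed
  ultimately have "op_sup sc ip (T ` ?D) (T ((T ^^ k) y))" using nrm Suc by blast
  moreover have "T ` ?D = range (\<lambda>m. (T ^^ Suc k) (S m))" by (auto simp: image_image)
  ultimately show ?case by simp
qed

end



context vnm
begin

lemma main:
  assumes pot: "potential sc ip M (T ^^ N) y"
  shows "potential sc ip M T (\<lambda>\<xi>. \<Sum>k<N. (T ^^ k) y \<xi>)"
proof -
  from pot obtain x where sx: "summable_to sc ip M (T ^^ N) x y" and yP: "y \<in> pos_part sc ip M"
    by (auto simp: potential_def)
  have xP: "x \<in> pos_part sc ip M" and lim: "strong_lim ip (\<lambda>m \<xi>. \<Sum>n<m. ((T ^^ N) ^^ n) x \<xi>) y"
    using sx by (auto simp: summable_to_def)
  have PPpos: "A \<in> pos_part sc ip M \<Longrightarrow> pos_op sc ip A" for A by (simp add: pos_part_def)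
  have PPM: "A \<in> pos_part sc ip M \<Longrightarrow> A \<in> M" for A by (simp add: pos_part_def)
  have sumP: "(\<And>i. i \<in> I \<Longrightarrow> g i \<in> pos_part sc ip M) \<Longrightarrow> (\<lambda>\<xi>. \<Sum>i\<in>I. g i \<xi>) \<in> pos_part sc ip M"
    for I and g :: "nat \<Rightarrow> 'h \<Rightarrow> 'h"
    using M_sum[of I g] pos_sum_op[of I g] by (auto simp: pos_part_def)
  define yt where "yt = (\<lambda>\<xi>. \<Sum>k<N. (T ^^ k) y \<xi>)"
  have ytP: "yt \<in> pos_part sc ip M" unfolding yt_def using yP Tk_pos by (intro sumP) auto
  have ytb: "yt \<in> bops sc ip" using ytP by (simp add: pos_part_def pos_op_def)
  show ?thesis
  proof (cases "N = 0")
    case True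
    then have yt0: "yt = (\<lambda>\<xi>. 0)" by (simp add: yt_def)
    have zP: "(\<lambda>\<xi>. 0) \<in> pos_part sc ip M"
      using M_zero M_bops[OF M_zero] by (simp add: pos_part_def pos_op_def)
    have "summable_to sc ip M T (\<lambda>\<xi>. 0) yt"
      unfolding summable_to_def using zP ytP by (simp add: yt0 Tk_zero strong_lim_def hnorm_def)
    then show ?thesis using ytP by (auto simp: potential_def yt_def)
  next
    case False
    then have N: "N \<ge> 1" by simp
    define f where "f n = (T ^^ (N * n)) x" for n
    have fP: "f n \<in> pos_part sc ip M" for n unfolding f_def using xP by (rule Tk_pos)
    have Peq: "((T ^^ N) ^^ n) x = f n" for n by (simp add: f_def funpow_mult)
    define P where "P m = (\<lambda>\<xi>. \<Sum>n<m. f n \<xi>)" for m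
    have Pabs: "P = (\<lambda>m \<xi>. \<Sum>n<m. f n \<xi>)" by (simp add: fun_eq_iff P_def)
    have limP: "strong_lim ip P y" using lim by (simp add: Pabs Peq)
    have PP: "P m \<in> pos_part sc ip M" for m unfolding P_def using fP by (intro sumP)
    have Pmono: "m \<le> m' \<Longrightarrow> op_le sc ip (P m) (P m')" for m m'
      unfolding P_def using fP PPpos by (intro psum_mono) auto
    have supP: "op_sup sc ip (range P) y"
      using sup_of_lim[OF PPpos[OF PP] Pmono limP] yP by (simp add: pos_part_def pos_op_def)
    have limk: "strong_lim ip (\<lambda>m. (T ^^ k) (P m)) ((T ^^ k) y)" for k
    proof (rule lim_of_sup)
      show "pos_op sc ip ((T ^^ k) (P m))" for m using Tk_pos[OF PP] PPpos by blast
      show "op_le sc ip ((T ^^ k) (P m)) ((T ^^ k) (P m'))" if "m \<le> m'" for m m'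
        using Tk_mono[OF PPM[OF PP] PPM[OF PP] Pmono[OF that]] .
      show "op_sup sc ip (range (\<lambda>m. (T ^^ k) (P m))) ((T ^^ k) y)"
        by (rule normal_iter[OF PP Pmono supP])
    qed
    have Pk_eq: "(T ^^ k) (P m) = (\<lambda>\<xi>. \<Sum>n<m. (T ^^ (k + N * n)) x \<xi>)" for k m
    proof -
      have "(T ^^ k) (P m) = (\<lambda>\<xi>. \<Sum>n<m. (T ^^ k) (f n) \<xi>)"
        unfolding P_def using PPM[OF fP] by (intro Tk_sum) auto
      then show ?thesis by (simp add: f_def funpow_add)
    qed
    define R where "R J = (\<lambda>\<xi>. \<Sum>j<J. (T ^^ j) x \<xi>)" for J
    have RN: "R (N * m) = (\<lambda>\<xi>. \<Sum>k<N. (T ^^ k) (P m) \<xi>)" for m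
    proof
      fix \<xi>
      define g where "g j = (T ^^ j) x \<xi>" for j
      have "R (N * m) \<xi> = (\<Sum>j<m * N. g j)" by (simp add: R_def g_def mult.commute)
      also have "\<dots> = (\<Sum>n<m. \<Sum>j\<in>{n * N..<n * N + N}. g j)" by (rule sum.nat_group[symmetric])
      also have "\<dots> = (\<Sum>n<m. \<Sum>k<N. g (k + N * n))"
      proof (rule sum.cong[OF refl])
        fix n
        have "(\<Sum>j\<in>{0 + n * N..<N + n * N}. g j) = (\<Sum>k\<in>{0..<N}. g (k + n * N))"
          by (rule sum.shift_bounds_nat_ivl)
        then show "(\<Sum>j\<in>{n * N..<n * N + N}. g j) = (\<Sum>k<N. g (k + N * n))"
          by (simp add: atLeast0LessThan add.commute mult.commute)
      qed
      also have "\<dots> = (\<Sum>k<N. \<Sum>n<m. g (k + N * n))" by (rule sum.swap)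
      also have "\<dots> = (\<Sum>k<N. (T ^^ k) (P m) \<xi>)" by (simp add: Pk_eq g_def)
      finally show "R (N * m) \<xi> = (\<Sum>k<N. (T ^^ k) (P m) \<xi>)" .
    qed
    have limRN: "strong_lim ip (\<lambda>m. R (N * m)) yt"
      using strong_lim_sum[of "{..<N}" "\<lambda>k m. (T ^^ k) (P m)" "\<lambda>k. (T ^^ k) y"] limk
      by (simp add: RN yt_def)
    have gP: "(T ^^ j) x \<in> pos_part sc ip M" for j using xP by (rule Tk_pos)
    have RP: "R J \<in> pos_part sc ip M" for J unfolding R_def using gP by (intro sumP)
    have Rmono: "J \<le> J' \<Longrightarrow> op_le sc ip (R J) (R J')" for J J'
      unfolding R_def using gP PPpos by (intro psum_mono) auto
    have supR: "op_sup sc ip (range (\<lambda>m. R (N * m))) yt"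
      using sup_of_lim[OF PPpos[OF RP] _ limRN ytb] Rmono by simp
    have leR: "op_le sc ip (R J) yt" for J
    proof -
      have "op_le sc ip (R J) (R (N * J))" using N by (intro Rmono) simp
      moreover have "op_le sc ip (R (N * J)) yt" using supR by (auto simp: op_sup_def)
      ultimately show ?thesis by (rule op_le_trans)
    qed
    have q: "(\<lambda>J. Re (ip \<xi> (R J \<xi>))) \<longlonglongrightarrow> Re (ip \<xi> (yt \<xi>))" for \<xi>
    proof -
      have inc: "incseq (\<lambda>J. Re (ip \<xi> (R J \<xi>)))" unfolding incseq_def using le_Re[OF Rmono] by blast
      obtain Lq where Lq: "(\<lambda>J. Re (ip \<xi> (R J \<xi>))) \<longlonglongrightarrow> Lq"
        using incseq_convergent[OF inc, of "Re (ip \<xi> (yt \<xi>))"] le_Re[OF leR] by blast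
      have sm: "strict_mono (\<lambda>m. N * m)" using N by (auto simp: strict_mono_def)
      have "((\<lambda>J. Re (ip \<xi> (R J \<xi>))) \<circ> (\<lambda>m. N * m)) \<longlonglongrightarrow> Lq"
        by (rule LIMSEQ_subseq_LIMSEQ[OF Lq sm])
      moreover have "(\<lambda>m. Re (ip \<xi> (R (N * m) \<xi>))) \<longlonglongrightarrow> Re (ip \<xi> (yt \<xi>))"
        using limRN unfolding strong_lim_def by (intro tendsto_Re ip_tendsto) auto
      ultimately have "Lq = Re (ip \<xi> (yt \<xi>))" using LIMSEQ_unique by (auto simp: o_def)
      then show ?thesis using Lq by simp
    qed
    have "strong_lim ip R yt"
      by (rule lim_of_forms[OF PPpos[OF RP] ytb leR q])
    then have "summable_to sc ip M T x yt"
      unfolding summable_to_def using xP ytP by (simp add: R_def[abs_def])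
    then show ?thesis using ytP by (auto simp: potential_def yt_def)
  qed
qed

end



theorem proposition3p7:
  fixes sc :: "complex \<Rightarrow> 'h::ab_group_add \<Rightarrow> 'h"
    and ip :: "'h \<Rightarrow> 'h \<Rightarrow> complex"
    and M :: "('h \<Rightarrow> 'h) set"
    and T :: "('h \<Rightarrow> 'h) \<Rightarrow> ('h \<Rightarrow> 'h)"
    and N :: nat
    and y :: "'h \<Rightarrow> 'h"
  assumes "von_neumann_algebra sc ip M"
    and "markov_operator sc ip M T"
    and "potential sc ip M (T ^^ N) y"
  shows "potential sc ip M T (\<lambda>\<xi>. \<Sum>k<N. (T ^^ k) y \<xi>)"
proof -
  have H: "complex_hilbert sc ip" using assms(1) by (simp add: von_neumann_algebra_def)
  interpret vnm sc ip M T
    by (rule vnm.intro[OF hilb.intro[OF H]], rule vnm_axioms.intro[OF assms(1,2)])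
  show ?thesis by (rule main[OF assms(3)])
qed

end
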